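(* Let $A\in\mathbb{R}^{n\times n}$, $B\in\mathbb{R}^{n\times m}$, $C\in\mathbb{R}^{p\times n}$, $E\in\mathbb{R}^{n\times p}$, let $\Theta\subset\mathbb{R}^p$ be a convex compact set, and let $w:[0,\infty)\to\mathbb{R}^m$ be locally integrable. Let $x:[0,\infty)\to\mathbb{R}^n$, $z:[0,\infty)\to\mathbb{R}^p$ be locally absolutely continuous functions satisfying, for almost all $t\ge 0$, $$\dot{x}=Ax+Bw+Ez,\quad y=Cx,\quad \dot z=P_{N_\Theta(z-y)}(\dot y),$$ and $z(t)\in y(t)+\Theta$ for all $t\ge0$. Let $F:=A+EC$ and let $\xi(t):=e^{tF}x(0)+\int_0^t e^{(t-s)F}Bw(s)\,ds$. Then for every $t\ge0$, $$x(t)\in\xi(t)+\Xi(t),$$ where $\Xi(t)\subset\mathbb{R}^n$ is the convex compact set whose support function is $$\sigma_{\Xi(t)}(u)=\int_0^t\sigma_\Theta(E^{T}e^{sF^{T}}u)\,ds,\qquad u\in\mathbb{R}^n.$$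
   Context: For a closed convex set $S\subset\mathbb{R}^r$ and $u\in\mathbb{R}^r$, the inward normal cone is $N_S(u):=\{s\in\mathbb{R}^r:\ \inf_{v\in S}s^{T}(v-u)\ge0\}$, and $P_S(u):=\operatorname{argmin}_{v\in S}|u-v|$ is the metric (Euclidean) projection onto $S$. The support function of a convex compact set $S\subset\mathbb{R}^r$ is $\sigma_S(u):=\max_{v\in S}u^{T}v$; convex compact sets are in bijection with their support functions. $|\cdot|$ is the Euclidean norm. The sum $\xi(t)+\Xi(t)$ is the translate of $\Xi(t)$ by $\xi(t)$. *)

theory Defs
  imports "HOL-Analysis.Analysis"
begin

primrec matpow :: "real^'n^'n \<Rightarrow> nat \<Rightarrow> real^'n^'n" where
  "matpow M 0 = mat 1"
| "matpow M (Suc k) = M ** matpow M k"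

definition mat_exp :: "real^'n^'n \<Rightarrow> real^'n^'n" where
  "mat_exp M = (\<Sum>k. (1 / fact k) *\<^sub>R matpow M k)"

definition abs_continuous_on :: "real \<Rightarrow> real \<Rightarrow> (real \<Rightarrow> 'a::real_normed_vector) \<Rightarrow> bool" where
  "abs_continuous_on lo hi f \<longleftrightarrow>
     (\<forall>\<epsilon>>0. \<exists>\<delta>>0. \<forall>(k::nat) (a::nat \<Rightarrow> real) b.
        (\<forall>i<k. lo \<le> a i \<and> a i \<le> b i \<and> b i \<le> hi) \<and>
        (\<forall>i<k. \<forall>j<k. i \<noteq> j \<longrightarrow> b i \<le> a j \<or> b j \<le> a i) \<and>
        (\<Sum>i<k. b i - a i) < \<delta>
        \<longrightarrow> (\<Sum>i<k. norm (f (b i) - f (a i))) < \<epsilon>)"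

definition loc_abs_continuous :: "(real \<Rightarrow> 'a::real_normed_vector) \<Rightarrow> bool" where
  "loc_abs_continuous f \<longleftrightarrow> (\<forall>T\<ge>0. abs_continuous_on 0 T f)"

text \<open>Inward normal cone N_S(u) = {s. inf_{v in S} s.(v-u) >= 0}.\<close>
definition normal_cone :: "'a::real_inner set \<Rightarrow> 'a \<Rightarrow> 'a set" where
  "normal_cone S u = {s. \<forall>v\<in>S. inner s (v - u) \<ge> 0}"

definition support_fun :: "'a::real_inner set \<Rightarrow> 'a \<Rightarrow> real" where
  "support_fun S u = Sup ((\<lambda>v. inner u v) ` S)"

end

theory Submission
  imports Defs
begin
typedef ('n::finite) sq = "UNIV :: (real^'n^'n) set"
  morphisms rep sabs by simp

lemma rep_sabs[simp]: "rep (sabs M) = M"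
  by (simp add: sabs_inverse)

lemma rep_eq_iff: "a = b \<longleftrightarrow> rep a = rep b"
  by (simp add: rep_inject)

lemma mat_add_rdistrib: "((A::real^'n^'m) + B) ** C = A ** C + B ** C"
  by (vector matrix_matrix_mult_def sum.distrib distrib_right)

instantiation sq :: (finite) real_normed_algebra_1
begin

definition zero_sq :: "'a sq" where "zero_sq = sabs 0"
definition one_sq :: "'a sq" where "one_sq = sabs (mat 1)"
definition plus_sq :: "'a sq \<Rightarrow> 'a sq \<Rightarrow> 'a sq" where "plus_sq a b = sabs (rep a + rep b)"
definition minus_sq :: "'a sq \<Rightarrow> 'a sq \<Rightarrow> 'a sq" where "minus_sq a b = sabs (rep a - rep b)"
definition uminus_sq :: "'a sq \<Rightarrow> 'a sq" where "uminus_sq a = sabs (- rep a)"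
definition times_sq :: "'a sq \<Rightarrow> 'a sq \<Rightarrow> 'a sq" where "times_sq a b = sabs (rep a ** rep b)"
definition scaleR_sq :: "real \<Rightarrow> 'a sq \<Rightarrow> 'a sq" where "scaleR_sq r a = sabs (r *\<^sub>R rep a)"
definition norm_sq :: "'a sq \<Rightarrow> real" where "norm_sq a = onorm (\<lambda>v. rep a *v v)"
definition sgn_sq :: "'a sq \<Rightarrow> 'a sq" where "sgn_sq x = scaleR (inverse (norm x)) x"
definition dist_sq :: "'a sq \<Rightarrow> 'a sq \<Rightarrow> real" where "dist_sq x y = norm (x - y)"
definition uniformity_sq :: "('a sq \<times> 'a sq) filter" where
  "uniformity_sq = (INF e\<in>{0<..}. principal {(x, y). dist x y < e})"
definition open_sq :: "'a sq set \<Rightarrow> bool" where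
  "open_sq U \<longleftrightarrow> (\<forall>x\<in>U. \<forall>\<^sub>F (x', y) in uniformity. x' = x \<longrightarrow> y \<in> U)"

lemma rep_simps[simp]:
  "rep 0 = 0" "rep 1 = mat 1" "rep (a + b) = rep a + rep b" "rep (a - b) = rep a - rep b"
  "rep (- a) = - rep a" "rep (a * b) = rep a ** rep b" "rep (r *\<^sub>R a) = r *\<^sub>R rep a"
  by (simp_all add: zero_sq_def one_sq_def plus_sq_def minus_sq_def uminus_sq_def times_sq_def scaleR_sq_def)

instance
proof
  fix a b c :: "'a sq" and r s :: real
  show "a + b + c = a + (b + c)" by (simp add: rep_eq_iff algebra_simps)
  show "a + b = b + a" by (simp add: rep_eq_iff algebra_simps)
  show "0 + a = a" by (simp add: rep_eq_iff)
  show "- a + a = 0" by (simp add: rep_eq_iff)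
  show "a - b = a + - b" by (simp add: rep_eq_iff)
  show "r *\<^sub>R (a + b) = r *\<^sub>R a + r *\<^sub>R b" by (simp add: rep_eq_iff scaleR_right_distrib)
  show "(r + s) *\<^sub>R a = r *\<^sub>R a + s *\<^sub>R a" by (simp add: rep_eq_iff scaleR_left_distrib)
  show "r *\<^sub>R s *\<^sub>R a = (r * s) *\<^sub>R a" by (simp add: rep_eq_iff)
  show "1 *\<^sub>R a = a" by (simp add: rep_eq_iff)
  show "a * b * c = a * (b * c)" by (simp add: rep_eq_iff matrix_mul_assoc)
  show "1 * a = a" by (simp add: rep_eq_iff)
  show "a * 1 = a" by (simp add: rep_eq_iff)
  show "(a + b) * c = a * c + b * c" by (simp add: rep_eq_iff mat_add_rdistrib)
  show "a * (b + c) = a * b + a * c" by (simp add: rep_eq_iff matrix_add_ldistrib)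
  show "(0::'a sq) \<noteq> 1"
  proof
    assume "(0::'a sq) = 1"
    then have "(0::real^'a^'a) = mat 1" by (simp add: rep_eq_iff)
    moreover have "(mat 1 :: real^'a^'a) $ undefined $ undefined = 1" by (simp add: mat_def)
    ultimately show False by simp
  qed
  show "r *\<^sub>R a * b = r *\<^sub>R (a * b)" by (simp add: rep_eq_iff scalar_matrix_assoc)
  show "a * r *\<^sub>R b = r *\<^sub>R (a * b)" by (simp add: rep_eq_iff matrix_scalar_ac scalar_matrix_assoc[symmetric])
  show "dist a b = norm (a - b)" by (simp add: dist_sq_def)
  show "sgn a = inverse (norm a) *\<^sub>R a" by (simp add: sgn_sq_def)
  show "(uniformity :: ('a sq \<times> 'a sq) filter) = (INF e\<in>{0<..}. principal {(x, y). dist x y < e})"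
    by (rule uniformity_sq_def)
  fix U :: "'a sq set"
  show "open U \<longleftrightarrow> (\<forall>x\<in>U. \<forall>\<^sub>F (x', y) in uniformity. x' = x \<longrightarrow> y \<in> U)"
    by (rule open_sq_def)
next
  fix a b :: "'a sq" and r :: real
  show "norm a = 0 \<longleftrightarrow> a = 0"
    unfolding norm_sq_def
    by (simp add: onorm_eq_0 rep_eq_iff matrix_eq)
  show "norm (a + b) \<le> norm a + norm b"
    unfolding norm_sq_def rep_simps matrix_vector_mult_add_rdistrib
    by (rule onorm_triangle) auto
  show "norm (r *\<^sub>R a) = \<bar>r\<bar> * norm a"
  proof -
    have "(\<lambda>v. (r *\<^sub>R rep a) *v v) = (\<lambda>v. r *\<^sub>R (rep a *v v))"
      by (simp add: scaleR_matrix_vector_assoc)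
    then show ?thesis unfolding norm_sq_def rep_simps
      by (simp add: onorm_scaleR)
  qed
  show "norm (a * b) \<le> norm a * norm b"
  proof -
    have "onorm ((\<lambda>v. rep a *v v) \<circ> (\<lambda>v. rep b *v v)) \<le> onorm (\<lambda>v. rep a *v v) * onorm (\<lambda>v. rep b *v v)"
      by (rule onorm_compose) auto
    then show ?thesis unfolding norm_sq_def by (simp add: o_def matrix_vector_mul_assoc)
  qed
  show "norm (1::'a sq) = 1"
  proof -
    have e: "(*v) (mat 1::real^'a^'a) = (\<lambda>v. v)" by (rule ext) simp
    show ?thesis unfolding norm_sq_def rep_simps e by (rule onorm_id)
  qed
qed

end

lemma norm_row_le: "norm ((x::'a::real_normed_vector^'n) $ i) \<le> norm x"
  unfolding norm_vec_def by (rule member_le_L2_set) auto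

lemma norm_rep_le: "norm (rep a) \<le> real CARD('n) * real CARD('n) * norm (a::'n::finite sq)"
proof -
  have "norm (rep a) \<le> (\<Sum>i\<in>UNIV. norm (rep a $ i))"
    unfolding norm_vec_def by (rule L2_set_le_sum) auto
  also have "\<dots> \<le> (\<Sum>i\<in>(UNIV::'n set). real CARD('n) * norm a)"
  proof (rule sum_mono)
    fix i
    have "norm (rep a $ i) \<le> (\<Sum>j\<in>UNIV. \<bar>rep a $ i $ j\<bar>)" by (rule norm_le_l1_cart)
    also have "\<dots> \<le> (\<Sum>j\<in>(UNIV::'n set). norm a)"
      by (rule sum_mono) (simp add: norm_sq_def matrix_component_le_onorm)
    finally show "norm (rep a $ i) \<le> real CARD('n) * norm a" by simp
  qed
  finally show ?thesis by simp
qed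

lemma norm_le_rep: "norm (a::'n::finite sq) \<le> real CARD('n) * real CARD('n) * norm (rep a)"
  unfolding norm_sq_def
  by (rule onorm_le_matrix_component) (rule order_trans[OF component_le_norm_cart norm_row_le])

instance sq :: (finite) banach
proof
  fix X :: "nat \<Rightarrow> 'a sq"
  assume "Cauchy X"
  define K where "K = real CARD('a) * real CARD('a)"
  have K: "K > 0" by (simp add: K_def)
  have "Cauchy (\<lambda>n. rep (X n))"
  proof (rule metric_CauchyI)
    fix e :: real assume "e > 0"
    then obtain M where M: "\<forall>m\<ge>M. \<forall>n\<ge>M. dist (X m) (X n) < e / K"
      using metric_CauchyD[OF \<open>Cauchy X\<close>, of "e/K"] K by auto
    show "\<exists>M. \<forall>m\<ge>M. \<forall>n\<ge>M. dist (rep (X m)) (rep (X n)) < e"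
    proof (intro exI allI impI)
      fix m n assume "m \<ge> M" "n \<ge> M"
      have "dist (rep (X m)) (rep (X n)) = norm (rep (X m - X n))" by (simp add: dist_norm)
      also have "\<dots> \<le> K * norm (X m - X n)" unfolding K_def by (rule norm_rep_le)
      also have "\<dots> < K * (e / K)" using M \<open>m \<ge> M\<close> \<open>n \<ge> M\<close> K
        by (intro mult_strict_left_mono) (auto simp: dist_norm)
      finally show "dist (rep (X m)) (rep (X n)) < e" using K by simp
    qed
  qed
  then obtain L where L: "(\<lambda>n. rep (X n)) \<longlonglongrightarrow> L"
    using Cauchy_convergent_iff convergent_def by blast
  have "X \<longlonglongrightarrow> sabs L"
  proof (rule LIMSEQ_I)
    fix e :: real assume "e > 0"
    then obtain M where M: "\<forall>n\<ge>M. norm (rep (X n) - L) < e / K"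
      using LIMSEQ_D[OF L, of "e/K"] K by auto
    show "\<exists>M. \<forall>n\<ge>M. norm (X n - sabs L) < e"
    proof (intro exI allI impI)
      fix n assume "n \<ge> M"
      have "norm (X n - sabs L) \<le> K * norm (rep (X n - sabs L))" unfolding K_def by (rule norm_le_rep)
      also have "\<dots> < K * (e / K)" using M \<open>n \<ge> M\<close> K
        by (intro mult_strict_left_mono) auto
      finally show "norm (X n - sabs L) < e" using K by simp
    qed
  qed
  then show "convergent X" by (auto simp: convergent_def)
qed

definition act :: "'n::finite sq \<Rightarrow> real^'n \<Rightarrow> real^'n" where "act a v = rep a *v v"

lemma bb_act: "bounded_bilinear act"
proof
  fix a a' :: "'n::finite sq" and b b' :: "real^'n" and r :: real
  show "act (a + a') b = act a b + act a' b" by (simp add: act_def matrix_vector_mult_add_rdistrib)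
  show "act a (b + b') = act a b + act a b'" by (simp add: act_def matrix_vector_right_distrib)
  show "act (r *\<^sub>R a) b = r *\<^sub>R act a b" by (simp add: act_def scaleR_matrix_vector_assoc)
  show "act a (r *\<^sub>R b) = r *\<^sub>R act a b" by (simp add: act_def matrix_vector_mult_scaleR)
next
  show "\<exists>K. \<forall>a b. norm (act a b) \<le> norm a * norm b * K"
  proof (intro exI allI)
    fix a b
    show "norm (act a b) \<le> norm a * norm b * 1"
      unfolding act_def norm_sq_def using onorm[OF matrix_vector_mul_bounded_linear, of "rep a" b] by simp
  qed
qed

lemma rep_power: "rep (x ^ k) = matpow (rep x) k"
  by (induction k) simp_all

lemma bl_rep: "bounded_linear (rep :: 'n::finite sq \<Rightarrow> _)"
proof (rule bounded_linear_intro[where K="real CARD('n) * real CARD('n)"])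
  fix x :: "'n sq"
  show "norm (rep x) \<le> norm x * (real CARD('n) * real CARD('n))"
    using norm_rep_le[of x] by (simp add: mult.commute)
qed simp_all

lemma exp_series_rep: "rep (x ^ n /\<^sub>R fact n) = (1 / fact n) *\<^sub>R matpow (rep x) n"
  by (simp add: rep_power divide_inverse)

lemma summable_matexp: "summable (\<lambda>n. (1 / fact n) *\<^sub>R matpow (M::real^'n::finite^'n) n)"
proof -
  have "summable (\<lambda>n. rep ((sabs M) ^ n /\<^sub>R fact n))"
    by (rule bounded_linear.summable[OF bl_rep summable_exp_generic])
  then show ?thesis by (simp add: rep_power divide_inverse)
qed

lemma mat_exp_rep: "mat_exp M = rep (exp (sabs M))"
proof -
  have "rep (exp (sabs M)) = rep (\<Sum>n. (sabs M) ^ n /\<^sub>R fact n)" by (simp add: exp_def)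
  also have "\<dots> = (\<Sum>n. rep ((sabs M) ^ n /\<^sub>R fact n))"
    by (rule bounded_linear.suminf[OF bl_rep summable_exp_generic])
  also have "\<dots> = mat_exp M" by (simp add: rep_power divide_inverse mat_exp_def)
  finally show ?thesis by simp
qed

lemma sabs_scaleR: "sabs (s *\<^sub>R M) = s *\<^sub>R sabs M"
  by (simp add: rep_eq_iff)

lemma mat_exp_scaleR: "mat_exp (s *\<^sub>R M) = rep (exp (s *\<^sub>R sabs M))"
  by (simp add: mat_exp_rep sabs_scaleR)

lemma mat_exp_0: "mat_exp (0 *\<^sub>R (M::real^'n::finite^'n)) = mat 1"
  unfolding mat_exp_scaleR by simp

lemma mat_exp_add: "mat_exp (s *\<^sub>R M) ** mat_exp (r *\<^sub>R M) = mat_exp ((s + r) *\<^sub>R M)"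
proof -
  have c: "(s *\<^sub>R sabs M) * (r *\<^sub>R sabs M) = (r *\<^sub>R sabs M) * (s *\<^sub>R sabs M)"
    by (simp add: mult_scaleR_left mult_scaleR_right)
  have "exp ((s + r) *\<^sub>R sabs M) = exp (s *\<^sub>R sabs M + r *\<^sub>R sabs M)"
    by (simp add: scaleR_left_distrib)
  also have "\<dots> = exp (s *\<^sub>R sabs M) * exp (r *\<^sub>R sabs M)"
    by (rule exp_add_commuting[OF c])
  finally show ?thesis by (simp add: mat_exp_scaleR)
qed

lemma matpow_comm: "matpow M k ** M = M ** matpow M k"
  by (induction k) (simp_all add: matrix_mul_assoc[symmetric])

lemma transpose_matpow: "transpose (matpow M k) = matpow (transpose M) k"
  by (induction k) (simp_all add: matrix_transpose_mul matpow_comm)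

lemma bl_transpose: "bounded_linear (transpose :: real^'n::finite^'n \<Rightarrow> real^'n^'n)"
proof -
  have "linear (transpose :: real^'n::finite^'n \<Rightarrow> real^'n^'n)"
    by (rule linearI) (simp_all add: transpose_def vec_eq_iff transpose_scalar)
  then show ?thesis by (simp add: linear_conv_bounded_linear)
qed

lemma mat_exp_transpose: "mat_exp (transpose M) = transpose (mat_exp (M::real^'n::finite^'n))"
proof -
  have "transpose (mat_exp M) = (\<Sum>n. transpose ((1 / fact n) *\<^sub>R matpow M n))"
    unfolding mat_exp_def by (rule bounded_linear.suminf[OF bl_transpose summable_matexp])
  then show ?thesis by (simp add: mat_exp_def transpose_scalar transpose_matpow)
qed

lemma deriv_exp_sq: "((\<lambda>s. exp (s *\<^sub>R G)) has_vector_derivative exp (s *\<^sub>R G) * G) (at s within S)"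
  using exp_scaleR_has_vector_derivative_right has_vector_derivative_at_within by blast

lemma mat_neg_right: "(A::real^'n::finite^'n) ** (- B) = - (A ** B)"
  by (simp add: matrix_matrix_mult_def vec_eq_iff sum_negf)

lemma mat_neg_vec: "(- (A::real^'n::finite^'n)) *v y = - (A *v y)"
  by (simp add: matrix_vector_mult_def vec_eq_iff sum_negf)

lemma deriv_g:
  fixes M :: "real^'n::finite^'n"
  assumes "(x has_vector_derivative x') (at s within S)"
  shows "((\<lambda>s. mat_exp ((-s) *\<^sub>R M) *v x s) has_vector_derivative
           mat_exp ((-s) *\<^sub>R M) *v (x' - M *v x s)) (at s within S)"
proof -
  define G where "G = sabs (- M)"
  have e: "mat_exp ((-s) *\<^sub>R M) = rep (exp (s *\<^sub>R G))" for s
  proof -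
    have "(-s) *\<^sub>R M = s *\<^sub>R (- M)" by simp
    then show ?thesis unfolding G_def by (simp only: mat_exp_scaleR)
  qed
  have "((\<lambda>s. act (exp (s *\<^sub>R G)) (x s)) has_vector_derivative
         act (exp (s *\<^sub>R G)) x' + act (exp (s *\<^sub>R G) * G) (x s)) (at s within S)"
    by (rule bounded_bilinear.has_vector_derivative[OF bb_act deriv_exp_sq assms])
  moreover have "act (exp (s *\<^sub>R G)) x' + act (exp (s *\<^sub>R G) * G) (x s)
      = rep (exp (s *\<^sub>R G)) *v (x' - M *v x s)"
    by (simp add: act_def G_def mat_neg_right mat_neg_vec matrix_vector_mult_diff_distrib
        matrix_vector_mul_assoc[symmetric])
  ultimately show ?thesis unfolding e act_def by simp
qed

lemma cont_exp_sq: "continuous_on S (\<lambda>s. exp (s *\<^sub>R (G::'n::finite sq)))"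
  by (rule continuous_at_imp_continuous_on)
     (use has_vector_derivative_continuous[OF deriv_exp_sq[where S=UNIV]] in blast)

lemma cont_matexp_vec:
  fixes M :: "real^'n::finite^'n"
  assumes "continuous_on S f" "continuous_on S y"
  shows "continuous_on S (\<lambda>s. mat_exp (f s *\<^sub>R M) *v y s)"
proof -
  have "continuous_on S (\<lambda>s. exp (f s *\<^sub>R sabs M))"
    using continuous_on_compose2[OF cont_exp_sq[of UNIV "sabs M"] assms(1)] by simp
  then have "continuous_on S (\<lambda>s. act (exp (f s *\<^sub>R sabs M)) (y s))"
    by (rule bounded_bilinear.continuous_on[OF bb_act _ assms(2)])
  then show ?thesis by (simp add: act_def mat_exp_scaleR)
qed

lemma lip_exp_sq:
  fixes G :: "'n::finite sq"
  assumes "a \<in> {-T..T}" "b \<in> {-T..T}"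
  shows "norm (exp (b *\<^sub>R G) - exp (a *\<^sub>R G)) \<le> (exp (T * norm G) * norm G) * \<bar>b - a\<bar>"
proof -
  have "norm (exp (b *\<^sub>R G) - exp (a *\<^sub>R G)) \<le> (exp (T * norm G) * norm G) * norm (b - a)"
  proof (rule differentiable_bound[where f'="\<lambda>s h. h *\<^sub>R (exp (s *\<^sub>R G) * G)"])
    show "convex {-T..T}" by simp
    fix s assume s: "s \<in> {-T..T}"
    show "((\<lambda>s. exp (s *\<^sub>R G)) has_derivative (\<lambda>h. h *\<^sub>R (exp (s *\<^sub>R G) * G))) (at s within {-T..T})"
      using deriv_exp_sq[of G s] unfolding has_vector_derivative_def .
    have "onorm (\<lambda>h::real. h *\<^sub>R (exp (s *\<^sub>R G) * G)) = onorm (\<lambda>h::real. h) * norm (exp (s *\<^sub>R G) * G)"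
      by (rule onorm_scaleR_left) (rule bounded_linear_ident)
    also have "\<dots> = norm (exp (s *\<^sub>R G) * G)" by (simp add: onorm_id)
    also have "\<dots> \<le> norm (exp (s *\<^sub>R G)) * norm G" by (rule norm_mult_ineq)
    also have "\<dots> \<le> exp (T * norm G) * norm G"
    proof (rule mult_right_mono)
      have "norm (exp (s *\<^sub>R G)) \<le> exp (norm (s *\<^sub>R G))" by (rule norm_exp)
      also have "\<dots> \<le> exp (T * norm G)"
        using s by (auto intro!: mult_right_mono)
      finally show "norm (exp (s *\<^sub>R G)) \<le> exp (T * norm G)" .
    qed simp
    finally show "onorm (\<lambda>h::real. h *\<^sub>R (exp (s *\<^sub>R G) * G)) \<le> exp (T * norm G) * norm G" .
  qed (use assms in auto)
  then show ?thesis by simp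
qed

section \<open>Support functions\<close>

lemma sf_bdd: "compact S \<Longrightarrow> bdd_above ((\<lambda>v. inner u v) ` S)"
  by (intro bounded_imp_bdd_above compact_imp_bounded compact_continuous_image continuous_intros)

lemma sf_ge: "compact S \<Longrightarrow> v \<in> S \<Longrightarrow> inner u v \<le> support_fun S u"
  unfolding support_fun_def by (rule cSup_upper) (auto intro: sf_bdd)

lemma sf_attain:
  assumes "compact S" "S \<noteq> {}"
  shows "\<exists>v\<in>S. support_fun S u = inner u v"
proof -
  obtain v where v: "v \<in> S" "\<And>y. y \<in> S \<Longrightarrow> inner u y \<le> inner u v"
  proof -
    have "continuous_on S (\<lambda>v. inner u v)" by (intro continuous_intros)
    from continuous_attains_sup[OF assms this] show ?thesis using that by blast
  qed
  have "support_fun S u = inner u v"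
    unfolding support_fun_def by (rule cSup_eq_maximum) (use v in auto)
  then show ?thesis using v by blast
qed

lemma sf_sub:
  assumes "compact S" "S \<noteq> {}"
  shows "support_fun S (a + b) \<le> support_fun S a + support_fun S b"
proof -
  obtain v where v: "v \<in> S" "support_fun S (a + b) = inner (a + b) v" using sf_attain[OF assms] by blast
  then show ?thesis using sf_ge[OF assms(1) v(1), of a] sf_ge[OF assms(1) v(1), of b]
    by (simp add: inner_add_left)
qed

lemma sf_hom:
  assumes "compact S" "S \<noteq> {}" "c \<ge> 0"
  shows "support_fun S (c *\<^sub>R a) = c * support_fun S a"
proof -
  obtain v where v: "v \<in> S" "support_fun S a = inner a v" using sf_attain[OF assms(1,2)] by blast
  obtain w where w: "w \<in> S" "support_fun S (c *\<^sub>R a) = inner (c *\<^sub>R a) w" using sf_attain[OF assms(1,2)] by blast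
  have "c * support_fun S a \<le> support_fun S (c *\<^sub>R a)"
    using sf_ge[OF assms(1) v(1), of "c *\<^sub>R a"] v by simp
  moreover have "support_fun S (c *\<^sub>R a) \<le> c * support_fun S a"
    using w sf_ge[OF assms(1) w(1), of a] assms(3) by (simp add: mult_left_mono)
  ultimately show ?thesis by simp
qed

lemma sf_lip:
  assumes "compact S" "S \<noteq> {}" "\<And>v. v \<in> S \<Longrightarrow> norm v \<le> R"
  shows "\<bar>support_fun S a - support_fun S b\<bar> \<le> R * norm (a - b)"
proof -
  have *: "support_fun S p - support_fun S q \<le> R * norm (p - q)" for p q
  proof -
    obtain v where v: "v \<in> S" "support_fun S p = inner p v" using sf_attain[OF assms(1,2)] by blast
    have "support_fun S p - support_fun S q \<le> inner p v - inner q v"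
      using sf_ge[OF assms(1) v(1), of q] v by simp
    also have "\<dots> = inner (p - q) v" by (simp add: inner_diff_left)
    also have "\<dots> \<le> norm (p - q) * norm v" by (rule norm_cauchy_schwarz)
    also have "\<dots> \<le> norm (p - q) * R" using assms(3)[OF v(1)] by (simp add: mult_left_mono)
    finally show ?thesis by (simp add: mult.commute)
  qed
  show ?thesis using *[of a b] *[of b a] by (simp add: norm_minus_commute abs_le_iff)
qed

lemma sf_cont:
  assumes "compact S" "S \<noteq> {}"
  shows "continuous_on T (support_fun S)"
proof -
  obtain R where R: "\<And>v. v \<in> S \<Longrightarrow> norm v \<le> R"
    using compact_imp_bounded[OF assms(1)] bounded_iff by blast
  define R' where "R' = max R 1"
  have R': "R' > 0" "\<And>v. v \<in> S \<Longrightarrow> norm v \<le> R'" using R unfolding R'_def by force+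
  show ?thesis
    unfolding continuous_on_iff
  proof (intro ballI allI impI)
    fix x e :: real
    fix x :: 'a and e :: real assume "e > 0"
    show "\<exists>d>0. \<forall>x'\<in>T. dist x' x < d \<longrightarrow> dist (support_fun S x') (support_fun S x) < e"
    proof (intro exI conjI ballI impI)
      show "e / R' > 0" using \<open>e > 0\<close> R' by simp
      fix x' assume "dist x' x < e / R'"
      then have "R' * norm (x' - x) < e" using R' by (simp add: dist_norm field_simps)
      then show "dist (support_fun S x') (support_fun S x) < e"
        using sf_lip[OF assms R'(2), of x' x] by (simp add: dist_real_def)
    qed
  qed
qed

section \<open>Sublinear functions are support functions\<close>

lemma sublinear_support:
  fixes H :: "'a::euclidean_space \<Rightarrow> real"
  assumes sub: "\<And>u v. H (u + v) \<le> H u + H v" and hom: "\<And>c u. c \<ge> 0 \<Longrightarrow> H (c *\<^sub>R u) = c * H u"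
  shows "\<exists>p. (\<forall>u. inner p u \<le> H u) \<and> inner p u0 = H u0"
proof -
  have H0: "H 0 = 0" using hom[of 0 0] by simp
  define S where "S = {z :: 'a \<times> real. H (fst z) < snd z}"
  define T where "T = {(u0, H u0)}"
  have cS: "convex S"
    unfolding convex_def S_def
  proof (intro ballI allI impI, clarsimp)
    fix u1 r1 u2 r2 :: "'a" and a b :: real
    fix r1' r2' :: real
    assume h: "H u1 < r1'" "H u2 < r2'" "0 \<le> a" "0 \<le> b" "a + b = 1"
    have "H (a *\<^sub>R u1 + b *\<^sub>R u2) \<le> H (a *\<^sub>R u1) + H (b *\<^sub>R u2)" by (rule sub)
    also have "\<dots> = a * H u1 + b * H u2" using hom h by simp
    also have "\<dots> < a * r1' + b * r2'"
    proof (cases "a = 0")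
      case True then show ?thesis using h by simp
    next
      case False then have "a > 0" using h by simp
      then have "a * H u1 < a * r1'" using h by simp
      moreover have "b * H u2 \<le> b * r2'" using h by (simp add: mult_left_mono)
      ultimately show ?thesis by simp
    qed
    finally show "H (a *\<^sub>R u1 + b *\<^sub>R u2) < a * r1' + b * r2'" .
  qed
  have cT: "convex T" unfolding T_def by simp
  have "(0, 1) \<in> S" unfolding S_def using H0 by simp
  then have neS: "S \<noteq> {}" by blast
  have neT: "T \<noteq> {}" unfolding T_def by simp
  have dis: "S \<inter> T = {}" unfolding S_def T_def by auto
  obtain a b where ab: "a \<noteq> 0" "\<forall>z\<in>S. inner a z \<le> b" "\<forall>z\<in>T. inner a z \<ge> b"
    using separating_hyperplane_sets[OF cS cT neS neT dis] by blast
  obtain p q where a: "a = (p, q)" by (cases a)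
  have inS: "\<And>u r. H u < r \<Longrightarrow> inner p u + q * r \<le> b"
    using ab(2) unfolding S_def a by force
  have atT: "inner p u0 + q * H u0 \<ge> b"
    using ab(3) unfolding T_def a by simp
  have q0: "q * r \<le> b" if "r > 0" for r using inS[of 0 r] that H0 by simp
  have "q < 0"
  proof (rule ccontr)
    assume "\<not> q < 0"
    then consider "q > 0" | "q = 0" by linarith
    then show False
    proof cases
      case 1
      have "q * ((\<bar>b\<bar> + 1) / q) \<le> b" using q0[of "(\<bar>b\<bar> + 1) / q"] 1 by simp
      then show False using 1 by simp
    next
      case 2
      then have "p \<noteq> 0" using ab(1) a by (auto simp: zero_prod_def)
      then have pp: "inner p p > 0" by simp
      define c where "c = (\<bar>b\<bar> + 1) / inner p p"
      have "inner p (c *\<^sub>R p) + q * (H (c *\<^sub>R p) + 1) \<le> b" by (rule inS) simp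
      then have "c * inner p p \<le> b" using 2 by simp
      then show False using pp unfolding c_def by simp
    qed
  qed
  have b0: "b \<ge> 0"
  proof (rule ccontr)
    assume "\<not> b \<ge> 0"
    then have "b < 0" by simp
    have "q * (b / (2 * q)) \<le> b" using q0[of "b / (2 * q)"] \<open>b < 0\<close> \<open>q < 0\<close>
      by (simp add: divide_neg_neg)
    then show False using \<open>b < 0\<close> \<open>q < 0\<close> by simp
  qed
  have le0: "inner p u + q * H u \<le> 0" for u
  proof (rule ccontr)
    assume "\<not> inner p u + q * H u \<le> 0"
    then have s: "inner p u + q * H u > 0" by simp
    define c where "c = (b - q + 1) / (inner p u + q * H u)"
    have c: "c > 0" unfolding c_def using s b0 \<open>q < 0\<close> by simp
    have "inner p (c *\<^sub>R u) + q * (H (c *\<^sub>R u) + 1) \<le> b" by (rule inS) simp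
    then have "c * (inner p u + q * H u) + q \<le> b" using hom[of c u] c by (simp add: algebra_simps)
    moreover have "c * (inner p u + q * H u) = b - q + 1" unfolding c_def using s by simp
    ultimately show False by simp
  qed
  define y where "y = (- 1 / q) *\<^sub>R p"
  have "inner y u \<le> H u" for u
  proof -
    have "inner y u = (- 1 / q) * inner p u" unfolding y_def by simp
    also have "\<dots> \<le> (- 1 / q) * (- q * H u)"
      using le0[of u] \<open>q < 0\<close> by (intro mult_left_mono) (simp_all add: divide_neg_neg)
    also have "\<dots> = H u" using \<open>q < 0\<close> by simp
    finally show ?thesis .
  qed
  moreover have "inner y u0 = H u0"
  proof -
    have "inner p u0 = - q * H u0" using le0[of u0] atT b0 by linarith
    then show ?thesis unfolding y_def using \<open>q < 0\<close> by simp
  qed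
  ultimately show ?thesis by blast
qed

section \<open>Absolute continuity\<close>

lemma ac_cont:
  assumes "abs_continuous_on lo hi f"
  shows "continuous_on {lo..hi} f"
  unfolding continuous_on_iff
proof (intro ballI allI impI)
  fix x e :: real assume x: "x \<in> {lo..hi}" and e: "e > 0"
  obtain d where d: "d > 0" and acd: "\<forall>(k::nat) (a::nat \<Rightarrow> real) b.
        (\<forall>i<k. lo \<le> a i \<and> a i \<le> b i \<and> b i \<le> hi) \<and>
        (\<forall>i<k. \<forall>j<k. i \<noteq> j \<longrightarrow> b i \<le> a j \<or> b j \<le> a i) \<and>
        (\<Sum>i<k. b i - a i) < d
        \<longrightarrow> (\<Sum>i<k. norm (f (b i) - f (a i))) < e"
    using assms[unfolded abs_continuous_on_def, rule_format, OF e] by blast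
  show "\<exists>d>0. \<forall>x'\<in>{lo..hi}. dist x' x < d \<longrightarrow> dist (f x') (f x) < e"
  proof (intro exI conjI ballI impI)
    show "d > 0" by (rule d)
    fix x' assume x': "x' \<in> {lo..hi}" and dx: "dist x' x < d"
    define a0 where "a0 = min x x'"
    define b0 where "b0 = max x x'"
    have "(\<Sum>i<Suc 0. norm (f ((\<lambda>_. b0) i) - f ((\<lambda>_. a0) i))) < e"
    proof (rule acd[rule_format])
      show "(\<forall>i<Suc 0. lo \<le> a0 \<and> a0 \<le> b0 \<and> b0 \<le> hi) \<and>
        (\<forall>i<Suc 0. \<forall>j<Suc 0. i \<noteq> j \<longrightarrow> b0 \<le> a0 \<or> b0 \<le> a0) \<and> (\<Sum>i<Suc 0. b0 - a0) < d"
        using x x' dx unfolding a0_def b0_def by (auto simp: dist_real_def)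
    qed
    then have "norm (f b0 - f a0) < e" by simp
    then show "dist (f x') (f x) < e"
      unfolding a0_def b0_def by (cases "x \<le> x'") (auto simp: dist_norm norm_minus_commute)
  qed
qed

lemma disjoint_open_intervals:
  fixes u v u' v' :: real
  assumes "u < v" "u' < v'" "{u<..<v} \<inter> {u'<..<v'} = {}"
  shows "v \<le> u' \<or> v' \<le> u"
proof (rule ccontr)
  assume "\<not> (v \<le> u' \<or> v' \<le> u)"
  then have "u' < v" "u < v'" by auto
  define m where "m = (max u u' + min v v') / 2"
  have "m \<in> {u<..<v} \<inter> {u'<..<v'}" using assms \<open>u' < v\<close> \<open>u < v'\<close>
    unfolding m_def by (auto simp: max_def min_def split: if_splits)
  then show False using assms by blast
qed

lemma negligible_open_cover:
  assumes "negligible N" "d > 0"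
  obtains U where "open U" "N \<subseteq> U" "U \<in> lmeasurable" "measure lebesgue U < d"
proof -
  have Nl: "N \<in> sets lebesgue" using assms(1) by (rule negligible_imp_sets)
  obtain T where T: "open T" "N \<subseteq> T" "(T - N) \<in> lmeasurable" "emeasure lebesgue (T - N) < ennreal d"
    using sets_lebesgue_outer_open[OF Nl assms(2)] by blast
  have Nm: "N \<in> lmeasurable" "measure lebesgue N = 0"
    using assms(1) negligible_iff_measure by auto
  have eq: "T = (T - N) \<union> N" using T(2) by auto
  have Tl: "T \<in> lmeasurable" using fmeasurable.Un[OF T(3) Nm(1)] eq by simp
  have "measure lebesgue T \<le> measure lebesgue (T - N) + measure lebesgue N"
    by (subst eq) (rule measure_Un_le; use T(3) Nm in auto)
  moreover have "measure lebesgue (T - N) < d"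
    using T(3,4) assms(2) by (simp add: emeasure_eq_measure2 ennreal_less_iff)
  ultimately have "measure lebesgue T < d" using Nm by simp
  then show ?thesis using that T Tl by blast
qed

lemma ftc_ac:
  fixes g :: "real \<Rightarrow> 'a::banach"
  assumes ab: "a \<le> b" and ac: "abs_continuous_on a b g" and N: "negligible N"
    and der: "\<And>x. x \<in> {a..b} - N \<Longrightarrow> (g has_vector_derivative g' x) (at x within {a..b})"
  shows "(g' has_integral (g b - g a)) {a..b}"
proof -
  define h where "h x = (if x \<in> N then 0 else g' x)" for x
  have "(h has_integral (g b - g a)) {a..b}"
    unfolding has_integral_real
  proof (intro allI impI)
    fix e :: real assume e: "e > 0"
    define \<epsilon> where "\<epsilon> = e / (2 * (b - a + 1))"
    have \<epsilon>: "\<epsilon> > 0" using e ab by (simp add: \<epsilon>_def)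
    have \<epsilon>ba: "\<epsilon> * (b - a) < e / 2"
    proof -
      have "\<epsilon> * (b - a) < \<epsilon> * (b - a + 1)" using \<epsilon> by simp
      also have "\<dots> = e / 2"
      proof -
        have "2 * (b - a + 1) \<noteq> 0" using ab by simp
        then show ?thesis unfolding \<epsilon>_def by (simp add: field_simps)
      qed
      finally show ?thesis .
    qed
    have half: "e / 2 > 0" using e by simp
    obtain \<delta> where \<delta>: "\<delta> > 0" and acd0: "\<forall>(k::nat) (aa::nat \<Rightarrow> real) bb. (\<forall>i<k. a \<le> aa i \<and> aa i \<le> bb i \<and> bb i \<le> b) \<and>
        (\<forall>i<k. \<forall>j<k. i \<noteq> j \<longrightarrow> bb i \<le> aa j \<or> bb j \<le> aa i) \<and>
        (\<Sum>i<k. bb i - aa i) < \<delta> \<longrightarrow> (\<Sum>i<k. norm (g (bb i) - g (aa i))) < e / 2"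
      using ac[unfolded abs_continuous_on_def, rule_format, OF half] by blast
    have acd: "(\<Sum>i<k. norm (g (bb i) - g (aa i))) < e / 2"
      if "\<forall>i<k. a \<le> aa i \<and> aa i \<le> bb i \<and> bb i \<le> b"
        "\<forall>i<k. \<forall>j<k. i \<noteq> j \<longrightarrow> bb i \<le> aa j \<or> bb j \<le> aa i"
        "(\<Sum>i<k. bb i - aa i) < \<delta>" for k :: nat and aa bb :: "nat \<Rightarrow> real"
      by (rule acd0[rule_format, of k aa bb]) (use that in blast)
    obtain U where U: "open U" "N \<subseteq> U" "U \<in> lmeasurable" "measure lebesgue U < \<delta>"
      using negligible_open_cover[OF N \<delta>] by blast
    have "\<forall>x. \<exists>d>0. x \<in> {a..b} - N \<longrightarrow>
         (\<forall>y\<in>{a..b}. norm (y-x) < d \<longrightarrow> norm (g y - g x - (y-x) *\<^sub>R g' x) \<le> \<epsilon> * norm (y-x))"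
      using der[unfolded has_vector_derivative_def has_derivative_within_alt] \<epsilon> by blast
    then obtain d where d: "\<And>x. 0 < d x"
      "\<And>x y. \<lbrakk>x \<in> {a..b} - N; y \<in> {a..b}; norm (y-x) < d x\<rbrakk>
             \<Longrightarrow> norm (g y - g x - (y-x) *\<^sub>R g' x) \<le> \<epsilon> * norm (y-x)"
      by metis
    have "\<forall>x. \<exists>r>0. x \<in> N \<longrightarrow> ball x r \<subseteq> U"
      using U(1,2) open_contains_ball by blast
    then obtain r where r: "\<And>x. 0 < r x" "\<And>x. x \<in> N \<Longrightarrow> ball x (r x) \<subseteq> U"
      by metis
    define \<gamma> where "\<gamma> x = (if x \<in> N then ball x (r x) else ball x (d x))" for x
    have gauge: "gauge \<gamma>"
      unfolding gauge_def \<gamma>_def using d(1) r(1) by auto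
    show "\<exists>\<gamma>. gauge \<gamma> \<and> (\<forall>\<D>. \<D> tagged_division_of {a..b} \<and> \<gamma> fine \<D> \<longrightarrow>
             norm ((\<Sum>(x, k)\<in>\<D>. measure lborel k *\<^sub>R h x) - (g b - g a)) < e)"
    proof (intro exI conjI allI impI)
      show "gauge \<gamma>" by (rule gauge)
      fix D assume "D tagged_division_of {a..b} \<and> \<gamma> fine D"
      then have D: "D tagged_division_of {a..b}" and fine: "\<gamma> fine D" by auto
      note Dd = tagged_division_ofD[OF D]
      have finD: "finite D" by (rule Dd(1))
      have Kint: "\<exists>u v. K = {u..v} \<and> u \<le> v \<and> a \<le> u \<and> v \<le> b \<and> x \<in> K" if xKD0: "(x,K) \<in> D" for x K
      proof -
        obtain u v where K: "K = cbox u v" using Dd(4)[OF xKD0] by blast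
        have "x \<in> K" "K \<subseteq> {a..b}" using Dd(2,3)[OF xKD0] by auto
        then show ?thesis unfolding K by (intro exI[of _ u] exI[of _ v]) auto
      qed
      have ba: "g b - g a = (\<Sum>(x,K)\<in>D. g (Sup K) - g (Inf K))"
        using additive_tagged_division_1[OF ab D, of g] by simp
      have ba2: "b - a = (\<Sum>(x,K)\<in>D. Sup K - Inf K)"
        using additive_tagged_division_1[OF ab D, of "\<lambda>x. x"] by simp
      define F where "F = (\<lambda>(x,K). measure lborel K *\<^sub>R h x - (g (Sup K) - g (Inf K)))"
      have eqsum: "(\<Sum>(x, k)\<in>D. measure lborel k *\<^sub>R h x) - (g b - g a) = sum F D"
        unfolding ba F_def by (simp add: split_def sum_subtractf)
      define D1 where "D1 = {p \<in> D. fst p \<in> N}"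
      define D2 where "D2 = {p \<in> D. fst p \<notin> N}"
      have "sum F D = sum F D1 + sum F D2"
      proof -
        have "D = D1 \<union> D2" "D1 \<inter> D2 = {}" unfolding D1_def D2_def by auto
        moreover have "finite D1" "finite D2" using finD unfolding D1_def D2_def by auto
        ultimately show ?thesis using sum.union_disjoint by metis
      qed
      have F2: "norm (sum F D2) \<le> \<epsilon> * (b - a)"
      proof -
        have "norm (sum F D2) \<le> (\<Sum>(x,K)\<in>D2. \<epsilon> * (Sup K - Inf K))"
        proof (rule sum_norm_le, safe)
          fix x K assume xK: "(x, K) \<in> D2"
          then have xKD: "(x,K) \<in> D" and xN: "x \<notin> N" unfolding D2_def by auto
          obtain u v where K: "K = {u..v}" "u \<le> v" "a \<le> u" "v \<le> b" "x \<in> K"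
            using Kint[OF xKD] by blast
          have ball: "K \<subseteq> ball x (d x)" using fine xKD xN unfolding \<gamma>_def fine_def by force
          have xab: "x \<in> {a..b} - N" using K xN by auto
          have uK: "u \<in> K" and vK: "v \<in> K" using K by auto
          have hx: "h x = g' x" using xN by (simp add: h_def)
          have "norm ((v - u) *\<^sub>R g' x - (g v - g u)) = norm (g u - g x - (u - x) *\<^sub>R g' x - (g v - g x - (v - x) *\<^sub>R g' x))"
            by (auto simp: algebra_simps)
          also have "\<dots> \<le> norm (g u - g x - (u - x) *\<^sub>R g' x) + norm (g v - g x - (v - x) *\<^sub>R g' x)"
            by (rule norm_triangle_ineq4)
          also have "\<dots> \<le> \<epsilon> * norm (u - x) + \<epsilon> * norm (v - x)"
          proof (rule add_mono)
            have "dist x u < d x" "dist x v < d x" using ball uK vK by auto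
            then have du: "norm (u - x) < d x" and dv: "norm (v - x) < d x"
              by (simp_all add: dist_norm norm_minus_commute)
            show "norm (g u - g x - (u - x) *\<^sub>R g' x) \<le> \<epsilon> * norm (u - x)"
              by (rule d(2)[OF xab _ du]) (use uK K in auto)
            show "norm (g v - g x - (v - x) *\<^sub>R g' x) \<le> \<epsilon> * norm (v - x)"
              by (rule d(2)[OF xab _ dv]) (use vK K in auto)
          qed
          also have "\<dots> = \<epsilon> * (v - u)"
            using K by (auto simp: field_simps)
          finally show "norm (F (x, K)) \<le> \<epsilon> * (Sup K - Inf K)"
            using K by (simp add: F_def hx)
        qed
        also have "\<dots> \<le> (\<Sum>(x,K)\<in>D. \<epsilon> * (Sup K - Inf K))"
        proof (rule sum_mono2[OF finD])
          show "D2 \<subseteq> D" unfolding D2_def by auto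
          fix p assume "p \<in> D - D2"
          then obtain x K where p: "p = (x,K)" "(x,K) \<in> D" by (cases p) auto
          then show "0 \<le> (case p of (x, K) \<Rightarrow> \<epsilon> * (Sup K - Inf K))"
            using Kint[OF p(2)] \<epsilon> by auto
        qed
        also have "\<dots> = \<epsilon> * (b - a)"
          unfolding ba2 by (simp add: sum_distrib_left split_def)
        finally show ?thesis .
      qed
      define D1' where "D1' = {p \<in> D1. Inf (snd p) < Sup (snd p)}"
      have finD1': "finite D1'" using finD unfolding D1'_def D1_def by auto
      have "norm (sum F D1) \<le> (\<Sum>p\<in>D1. norm (F p))" by (rule norm_sum)
      also have "\<dots> = (\<Sum>p\<in>D1'. norm (F p))"
      proof (rule sum.mono_neutral_right)
        show "finite D1" using finD unfolding D1_def by auto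
        show "D1' \<subseteq> D1" unfolding D1'_def by auto
        show "\<forall>i\<in>D1 - D1'. norm (F i) = 0"
        proof
          fix p assume p: "p \<in> D1 - D1'"
          then obtain x K where pp: "p = (x,K)" "(x,K) \<in> D" by (cases p) (auto simp: D1_def)
          obtain u v where K: "K = {u..v}" "u \<le> v" using Kint[OF pp(2)] by blast
          have "\<not> u < v" using p K pp unfolding D1'_def by auto
          then have "u = v" using K by auto
          then show "norm (F p) = 0" using K pp by (simp add: F_def)
        qed
      qed
      also have "\<dots> = (\<Sum>p\<in>D1'. norm (g (Sup (snd p)) - g (Inf (snd p))))"
        by (rule sum.cong) (auto simp: F_def D1'_def D1_def h_def norm_minus_commute)
      also have "\<dots> < e / 2"
      proof -
        obtain f where f: "bij_betw f {0..<card D1'} D1'"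
          using ex_bij_betw_nat_finite[OF finD1'] by blast
        define k where "k = card D1'"
        define aa where "aa i = Inf (snd (f i))" for i
        define bb where "bb i = Sup (snd (f i))" for i
        have fD: "f i \<in> D1'" if "i < k" for i
          using f that unfolding k_def bij_betw_def by auto
        have fD1: "f i \<in> D" if "i < k" for i
          using fD[OF that] unfolding D1'_def D1_def by auto
        have c1: "\<forall>i<k. a \<le> aa i \<and> aa i \<le> bb i \<and> bb i \<le> b"
        proof (intro allI impI)
          fix i assume i: "i < k"
          obtain x K where p: "f i = (x,K)" by (cases "f i")
          obtain u v where K: "K = {u..v}" "u \<le> v" "a \<le> u" "v \<le> b"
            using Kint fD1[OF i] p by metis
          show "a \<le> aa i \<and> aa i \<le> bb i \<and> bb i \<le> b"
            unfolding aa_def bb_def p using K by simp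
        qed
        have c2: "\<forall>i<k. \<forall>j<k. i \<noteq> j \<longrightarrow> bb i \<le> aa j \<or> bb j \<le> aa i"
        proof (intro allI impI)
          fix i j assume ij: "i < k" "j < k" "i \<noteq> j"
          obtain x K where p: "f i = (x,K)" by (cases "f i")
          obtain x' K' where p': "f j = (x',K')" by (cases "f j")
          have ne: "f i \<noteq> f j" using f ij unfolding bij_betw_def inj_on_def k_def by auto
          have "interior K \<inter> interior K' = {}"
            using tagged_division_ofD(5)[OF D, of x K x' K'] fD1[OF ij(1)] fD1[OF ij(2)] ne p p' by auto
          moreover obtain u v where K: "K = {u..v}" "u \<le> v" using Kint fD1[OF ij(1)] p by metis
          moreover obtain u' v' where K': "K' = {u'..v'}" "u' \<le> v'" using Kint fD1[OF ij(2)] p' by metis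
          moreover have "u < v" using fD[OF ij(1)] p K unfolding D1'_def by auto
          moreover have "u' < v'" using fD[OF ij(2)] p' K' unfolding D1'_def by auto
          ultimately have "v \<le> u' \<or> v' \<le> u"
            using disjoint_open_intervals[of u v u' v'] by simp
          then show "bb i \<le> aa j \<or> bb j \<le> aa i"
            unfolding aa_def bb_def p p' using K K' by auto
        qed
        have sumeq: "(\<Sum>i<k. G (f i)) = (\<Sum>p\<in>D1'. G p)" for G :: "real \<times> real set \<Rightarrow> 'b::comm_monoid_add"
          using sum.reindex_bij_betw[OF f, of G] unfolding k_def by (simp add: atLeast0LessThan)
        have c3: "(\<Sum>i<k. bb i - aa i) < \<delta>"
        proof -
          have "(\<Sum>i<k. bb i - aa i) = (\<Sum>p\<in>D1'. Sup (snd p) - Inf (snd p))"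
            unfolding aa_def bb_def using sumeq[of "\<lambda>p. Sup (snd p) - Inf (snd p)"] by simp
          also have "\<dots> = (\<Sum>p\<in>D1'. measure lebesgue (snd p))"
          proof (rule sum.cong[OF refl])
            fix p assume "p \<in> D1'"
            then obtain x K where p: "p = (x,K)" "(x,K) \<in> D" by (cases p) (auto simp: D1'_def D1_def)
            obtain u v where K: "K = {u..v}" "u \<le> v" using Kint[OF p(2)] by blast
            show "Sup (snd p) - Inf (snd p) = measure lebesgue (snd p)" using p K by simp
          qed
          also have "\<dots> = (\<Sum>K\<in>snd ` D1'. measure lebesgue K)"
          proof (rule sum.reindex[symmetric, unfolded o_def])
            show "inj_on snd D1'"
            proof (rule inj_onI)
              fix p q assume pq: "p \<in> D1'" "q \<in> D1'" "snd p = snd q"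
              show "p = q"
              proof (rule ccontr)
                assume "p \<noteq> q"
                obtain x K where p: "p = (x,K)" "(x,K) \<in> D" using pq by (cases p) (auto simp: D1'_def D1_def)
                obtain y K' where q: "q = (y,K')" "(y,K') \<in> D" using pq by (cases q) (auto simp: D1'_def D1_def)
                have KK: "K' = K" using pq p q by simp
                have "interior K \<inter> interior K = {}"
                  using tagged_division_ofD(5)[OF D p(2) q(2)] \<open>p \<noteq> q\<close> p q KK by auto
                moreover obtain u v where K: "K = {u..v}" "u \<le> v" using Kint[OF p(2)] by blast
                moreover have "u < v" using pq(1) p K unfolding D1'_def by auto
                ultimately show False by auto
              qed
            qed
          qed
          also have "\<dots> = measure lebesgue (\<Union>(snd ` D1'))"
          proof (rule content_division)
            have "snd ` D division_of {a..b}" using division_of_tagged_division[OF D] .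
            then have "snd ` D division_of \<Union>(snd ` D)" by (metis division_ofD(6))
            moreover have "snd ` D1' \<subseteq> snd ` D" unfolding D1'_def D1_def by auto
            ultimately show "snd ` D1' division_of \<Union>(snd ` D1')" by (rule division_of_subset)
          qed
          also have "\<dots> \<le> measure lebesgue U"
          proof (rule measure_mono_fmeasurable)
            show "\<Union>(snd ` D1') \<subseteq> U"
            proof safe
              fix p y assume p: "p \<in> D1'" and y: "y \<in> snd p"
              obtain x K where pp: "p = (x,K)" "(x,K) \<in> D" "x \<in> N" using p by (cases p) (auto simp: D1'_def D1_def)
              have "K \<subseteq> ball x (r x)" using fine pp unfolding \<gamma>_def fine_def by force
              then show "y \<in> U" using r(2)[OF pp(3)] y pp by auto
            qed
            show "\<Union>(snd ` D1') \<in> sets lebesgue"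
            proof -
              have "\<Union>(snd ` D1') \<subseteq> {a..b}" using Dd(3) unfolding D1'_def D1_def by force
              moreover have "finite (snd ` D1')" using finD1' by simp
              moreover have "\<forall>K\<in>snd ` D1'. K \<in> sets lebesgue"
              proof
                fix K assume "K \<in> snd ` D1'"
                then obtain x where "(x,K) \<in> D" unfolding D1'_def D1_def by force
                then obtain u v where "K = cbox u v" using Dd(4) by blast
                then show "K \<in> sets lebesgue" by simp
              qed
              ultimately show ?thesis by (intro sets.finite_Union) auto
            qed
          qed (use U in auto)
          also have "\<dots> < \<delta>" using U by simp
          finally show ?thesis .
        qed
        have "(\<Sum>i<k. norm (g (bb i) - g (aa i))) < e / 2"
          by (rule acd[OF c1 c2 c3])
        then show ?thesis
          unfolding aa_def bb_def using sumeq[of "\<lambda>p. norm (g (Sup (snd p)) - g (Inf (snd p)))"] by simp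
      qed
      finally have F1: "norm (sum F D1) < e / 2" .
      have "norm (sum F D) \<le> norm (sum F D1) + norm (sum F D2)"
        using \<open>sum F D = sum F D1 + sum F D2\<close> norm_triangle_ineq by metis
      also have "\<dots> < e / 2 + e / 2" using F1 F2 \<epsilon>ba by linarith
      finally show "norm ((\<Sum>(x, k)\<in>D. measure lborel k *\<^sub>R h x) - (g b - g a)) < e"
        unfolding eqsum by simp
    qed
  qed
  then show ?thesis
    by (rule has_integral_spike[OF N, rotated]) (simp add: h_def)
qed

lemma norm_act: "norm (act a v) \<le> norm a * norm v"
  unfolding act_def norm_sq_def using onorm[OF matrix_vector_mul_bounded_linear, of "rep a" v] by simp

lemma ac_product:
  fixes P :: "real \<Rightarrow> 'n::finite sq" and x :: "real \<Rightarrow> real^'n"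
  assumes acx: "abs_continuous_on lo hi x"
    and lipP: "\<And>a b. a \<in> {lo..hi} \<Longrightarrow> b \<in> {lo..hi} \<Longrightarrow> norm (P b - P a) \<le> L * \<bar>b - a\<bar>"
    and bP: "\<And>s. s \<in> {lo..hi} \<Longrightarrow> norm (P s) \<le> Mb"
    and bx: "\<And>s. s \<in> {lo..hi} \<Longrightarrow> norm (x s) \<le> Xb"
    and L: "L \<ge> 0" and Mb: "Mb \<ge> 0" and Xb: "Xb \<ge> 0"
  shows "abs_continuous_on lo hi (\<lambda>s. act (P s) (x s))"
  unfolding abs_continuous_on_def
proof (intro allI impI)
  fix \<epsilon> :: real assume e: "\<epsilon> > 0"
  define \<epsilon>1 where "\<epsilon>1 = \<epsilon> / (2 * (Mb + 1))"
  have e1: "\<epsilon>1 > 0" using e Mb by (simp add: \<epsilon>1_def)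
  obtain \<delta>1 where d1: "\<delta>1 > 0" and acx0: "\<forall>(k::nat) (a::nat \<Rightarrow> real) b.
        (\<forall>i<k. lo \<le> a i \<and> a i \<le> b i \<and> b i \<le> hi) \<and>
        (\<forall>i<k. \<forall>j<k. i \<noteq> j \<longrightarrow> b i \<le> a j \<or> b j \<le> a i) \<and>
        (\<Sum>i<k. b i - a i) < \<delta>1
        \<longrightarrow> (\<Sum>i<k. norm (x (b i) - x (a i))) < \<epsilon>1"
    using acx[unfolded abs_continuous_on_def, rule_format, OF e1] by blast
  define \<delta> where "\<delta> = min \<delta>1 (\<epsilon> / (2 * (L * Xb + 1)))"
  have LX: "L * Xb \<ge> 0" using L Xb by simp
  have d: "\<delta> > 0" unfolding \<delta>_def using d1 e LX by simp
  show "\<exists>\<delta>>0. \<forall>(k::nat) (a::nat \<Rightarrow> real) b.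
        (\<forall>i<k. lo \<le> a i \<and> a i \<le> b i \<and> b i \<le> hi) \<and>
        (\<forall>i<k. \<forall>j<k. i \<noteq> j \<longrightarrow> b i \<le> a j \<or> b j \<le> a i) \<and>
        (\<Sum>i<k. b i - a i) < \<delta>
        \<longrightarrow> (\<Sum>i<k. norm (act (P (b i)) (x (b i)) - act (P (a i)) (x (a i)))) < \<epsilon>"
  proof (intro exI conjI allI impI)
    show "\<delta> > 0" by (rule d)
    fix k :: nat and aa bb :: "nat \<Rightarrow> real"
    assume H: "(\<forall>i<k. lo \<le> aa i \<and> aa i \<le> bb i \<and> bb i \<le> hi) \<and>
        (\<forall>i<k. \<forall>j<k. i \<noteq> j \<longrightarrow> bb i \<le> aa j \<or> bb j \<le> aa i) \<and>
        (\<Sum>i<k. bb i - aa i) < \<delta>"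
    then have c1: "\<forall>i<k. lo \<le> aa i \<and> aa i \<le> bb i \<and> bb i \<le> hi"
      and c3: "(\<Sum>i<k. bb i - aa i) < \<delta>" by auto
    have "(\<Sum>i<k. bb i - aa i) < \<delta>1" using c3 unfolding \<delta>_def by linarith
    then have sx: "(\<Sum>i<k. norm (x (bb i) - x (aa i))) < \<epsilon>1"
      using acx0 H by blast
    have each: "norm (act (P (bb i)) (x (bb i)) - act (P (aa i)) (x (aa i)))
        \<le> Mb * norm (x (bb i) - x (aa i)) + (L * Xb) * (bb i - aa i)" if i: "i < k" for i
    proof -
      have ab: "aa i \<in> {lo..hi}" "bb i \<in> {lo..hi}" "aa i \<le> bb i" using c1 i by auto
      have "act (P (bb i)) (x (bb i)) - act (P (aa i)) (x (aa i))
          = act (P (bb i)) (x (bb i) - x (aa i)) + act (P (bb i) - P (aa i)) (x (aa i))"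
        by (simp add: bounded_bilinear.diff_right[OF bb_act] bounded_bilinear.diff_left[OF bb_act])
      then have "norm (act (P (bb i)) (x (bb i)) - act (P (aa i)) (x (aa i)))
          \<le> norm (act (P (bb i)) (x (bb i) - x (aa i))) + norm (act (P (bb i) - P (aa i)) (x (aa i)))"
        by (metis norm_triangle_ineq)
      also have "\<dots> \<le> norm (P (bb i)) * norm (x (bb i) - x (aa i)) + norm (P (bb i) - P (aa i)) * norm (x (aa i))"
        by (intro add_mono norm_act)
      also have "\<dots> \<le> Mb * norm (x (bb i) - x (aa i)) + (L * \<bar>bb i - aa i\<bar>) * Xb"
        by (intro add_mono mult_mono bP lipP bx ab) (use L Mb in auto)
      finally show ?thesis using ab by (simp add: algebra_simps)
    qed
    have "(\<Sum>i<k. norm (act (P (bb i)) (x (bb i)) - act (P (aa i)) (x (aa i))))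
        \<le> (\<Sum>i<k. Mb * norm (x (bb i) - x (aa i)) + (L * Xb) * (bb i - aa i))"
      by (rule sum_mono) (use each in auto)
    also have "\<dots> = Mb * (\<Sum>i<k. norm (x (bb i) - x (aa i))) + (L * Xb) * (\<Sum>i<k. bb i - aa i)"
      by (simp add: sum.distrib sum_distrib_left)
    also have "\<dots> < \<epsilon> / 2 + \<epsilon> / 2"
    proof (rule add_less_le_mono)
      have "Mb * (\<Sum>i<k. norm (x (bb i) - x (aa i))) \<le> Mb * \<epsilon>1"
        using sx Mb by (intro mult_left_mono) auto
      also have "\<dots> < \<epsilon> / 2"
      proof -
        have "Mb * \<epsilon>1 = (\<epsilon> / 2) * (Mb / (Mb + 1))" unfolding \<epsilon>1_def using Mb by (simp add: field_simps)
        also have "\<dots> < (\<epsilon> / 2) * 1" using e Mb by (intro mult_strict_left_mono) auto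
        finally show ?thesis by simp
      qed
      finally show "Mb * (\<Sum>i<k. norm (x (bb i) - x (aa i))) < \<epsilon> / 2" .
      have "(L * Xb) * (\<Sum>i<k. bb i - aa i) \<le> (L * Xb) * (\<epsilon> / (2 * (L * Xb + 1)))"
        using c3 LX unfolding \<delta>_def by (intro mult_left_mono) auto
      also have "\<dots> = (\<epsilon> / 2) * ((L * Xb) / (L * Xb + 1))" using LX by (simp add: field_simps)
      also have "\<dots> \<le> (\<epsilon> / 2) * 1" using e LX by (intro mult_left_mono) auto
      finally show "(L * Xb) * (\<Sum>i<k. bb i - aa i) \<le> \<epsilon> / 2" by simp
    qed
    finally show "(\<Sum>i<k. norm (act (P (bb i)) (x (bb i)) - act (P (aa i)) (x (aa i)))) < \<epsilon>" by simp
  qed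
qed

lemma flip_integral:
  fixes \<phi> :: "real \<Rightarrow> 'a::real_normed_vector"
  assumes "(\<phi> has_integral I) {0..t}"
  shows "((\<lambda>s. \<phi> (t - s)) has_integral I) {0..t}"
proof -
  have "((\<lambda>x. \<phi> (-x)) has_integral I) {-t..-0}"
    using has_integral_reflect_real[of \<phi> I 0 t] assms by blast
  from has_integral_shift_real_ivl[OF this, of "-t"] show ?thesis by simp
qed

lemma mat_exp_zero: "mat_exp (0::real^'n::finite^'n) = mat 1"
  using mat_exp_0[of "0::real^'n^'n"] by simp

lemma vec_alg: "(A::real^'n::finite^'n) *v xs + B *v ws + E *v zs - (A + E ** C) *v xs
     = B *v ws + E *v (zs - C *v xs)"
  by (simp add: matrix_vector_mult_add_rdistrib matrix_vector_mul_assoc[symmetric]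
      matrix_vector_mult_diff_distrib)

lemma inner_transp: "inner u ((M::real^'n::finite^'n) *v ((E::real^'p::finite^'n) *v v))
    = inner (transpose E *v (transpose M *v u)) v"
proof -
  have "inner u (M *v (E *v v)) = inner u ((M ** E) *v v)" by (simp add: matrix_vector_mul_assoc)
  also have "\<dots> = inner (u v* (M ** E)) v" by (simp add: dot_lmul_matrix)
  also have "u v* (M ** E) = transpose (M ** E) *v u" by simp
  also have "\<dots> = transpose E *v (transpose M *v u)"
    by (simp only: matrix_transpose_mul matrix_vector_mul_assoc[symmetric])
  finally show ?thesis .
qed

theorem lemma1:
  fixes A :: "real^'n^'n" and B :: "real^'m^'n" and C :: "real^'n^'p" and E :: "real^'p^'n"
    and \<Theta> :: "(real^'p) set"
    and w :: "real \<Rightarrow> real^'m" and x :: "real \<Rightarrow> real^'n" and z :: "real \<Rightarrow> real^'p"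
    and t :: real
  assumes "convex \<Theta>" and "compact \<Theta>"
    and "\<forall>T\<ge>0. w absolutely_integrable_on {0..T}"
    and "loc_abs_continuous x" and "loc_abs_continuous z"
    and "AE s in lebesgue. s > 0 \<longrightarrow>
           (x has_vector_derivative (A *v x s + B *v w s + E *v z s)) (at s) \<and>
           (z has_vector_derivative
              closest_point (normal_cone \<Theta> (z s - C *v x s))
                (C *v (A *v x s + B *v w s + E *v z s))) (at s)"
    and "\<forall>s\<ge>0. z s \<in> (\<lambda>v. C *v x s + v) ` \<Theta>"
    and "t \<ge> 0"
  shows "\<exists>\<Xi> :: (real^'n) set. convex \<Xi> \<and> compact \<Xi> \<and>
           (\<forall>u. support_fun \<Xi> u =
              integral {0..t} (\<lambda>s. support_fun \<Theta>
                 (transpose E *v (mat_exp (s *\<^sub>R transpose (A + E ** C)) *v u)))) \<and>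
           x t \<in> (\<lambda>v. (mat_exp (t *\<^sub>R (A + E ** C)) *v x 0
                     + integral {0..t} (\<lambda>s. mat_exp ((t - s) *\<^sub>R (A + E ** C)) *v (B *v w s))) + v) ` \<Xi>"
proof -
  define F where "F = A + E ** C"
  have cpt: "compact \<Theta>" by (rule assms(2))
  have t0: "t \<ge> 0" by (rule assms(8))
  have Tne: "\<Theta> \<noteq> {}" using assms(7) by auto
  have acx: "abs_continuous_on 0 t x" using assms(4) t0 unfolding loc_abs_continuous_def by blast
  have acz: "abs_continuous_on 0 t z" using assms(5) t0 unfolding loc_abs_continuous_def by blast
  have cx: "continuous_on {0..t} x" by (rule ac_cont[OF acx])
  have cz: "continuous_on {0..t} z" by (rule ac_cont[OF acz])
  define vv where "vv s = z s - C *v x s" for s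
  have vvT: "vv s \<in> \<Theta>" if "s \<in> {0..t}" for s
  proof -
    have "z s \<in> (\<lambda>v. C *v x s + v) ` \<Theta>" using assms(7) that by auto
    then obtain v where "v \<in> \<Theta>" "z s = C *v x s + v" by blast
    then show ?thesis unfolding vv_def by simp
  qed
  have cvv: "continuous_on {0..t} vv"
    unfolding vv_def
    by (intro continuous_on_diff cz bounded_linear.continuous_on[OF matrix_vector_mul_bounded_linear cx])
  obtain N where N: "negligible N" and NP: "{s. \<not> (s > 0 \<longrightarrow>
           (x has_vector_derivative (A *v x s + B *v w s + E *v z s)) (at s) \<and>
           (z has_vector_derivative
              closest_point (normal_cone \<Theta> (z s - C *v x s))
                (C *v (A *v x s + B *v w s + E *v z s))) (at s))} \<subseteq> N"
    using assms(6)[unfolded eventually_ae_filter_negligible] by blast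
  have N0: "negligible (N \<union> {0})" using N by (simp add: negligible_Un)
  have derx: "(x has_vector_derivative (A *v x s + B *v w s + E *v z s)) (at s within {0..t})"
    if s: "s \<in> {0..t} - (N \<union> {0})" for s
  proof -
    have "s > 0" using s by auto
    moreover have "s \<notin> N" using s by auto
    ultimately have "(x has_vector_derivative (A *v x s + B *v w s + E *v z s)) (at s)"
      using NP by blast
    then show ?thesis by (rule has_vector_derivative_at_within)
  qed
  define g where "g s = mat_exp ((-s) *\<^sub>R F) *v x s" for s
  define g' where "g' s = mat_exp ((-s) *\<^sub>R F) *v (B *v w s + E *v vv s)" for s
  have derg: "(g has_vector_derivative g' s) (at s within {0..t})"
    if s: "s \<in> {0..t} - (N \<union> {0})" for s
    using deriv_g[OF derx[OF s], of F] unfolding g_def g'_def F_def vv_def vec_alg .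
  define G where "G = sabs (- F)"
  have geq: "g = (\<lambda>s. act (exp (s *\<^sub>R G)) (x s))"
  proof
    fix s
    have "(-s) *\<^sub>R F = s *\<^sub>R (- F)" by simp
    then show "g s = act (exp (s *\<^sub>R G)) (x s)"
      unfolding g_def act_def G_def by (simp only: mat_exp_scaleR)
  qed
  obtain Xb0 where Xb0: "\<And>y. y \<in> x ` {0..t} \<Longrightarrow> norm y \<le> Xb0"
    using compact_imp_bounded[OF compact_continuous_image[OF cx compact_Icc]] bounded_iff by metis
  have acg: "abs_continuous_on 0 t g"
    unfolding geq
  proof (rule ac_product[OF acx, where L="exp (t * norm G) * norm G" and Mb="exp (t * norm G)" and Xb="max Xb0 0"])
    fix a b assume "a \<in> {0..t}" "b \<in> {0..t}"
    then show "norm (exp (b *\<^sub>R G) - exp (a *\<^sub>R G)) \<le> exp (t * norm G) * norm G * \<bar>b - a\<bar>"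
      by (intro lip_exp_sq) auto
  next
    fix s assume s: "s \<in> {0..t}"
    have "norm (exp (s *\<^sub>R G)) \<le> exp (norm (s *\<^sub>R G))" by (rule norm_exp)
    also have "\<dots> \<le> exp (t * norm G)" using s by (auto intro!: mult_right_mono)
    finally show "norm (exp (s *\<^sub>R G)) \<le> exp (t * norm G)" .
  next
    fix s assume s: "s \<in> {0..t}"
    show "norm (x s) \<le> max Xb0 0" using Xb0[of "x s"] s by force
  qed auto
  have FTC: "(g' has_integral (g t - g 0)) {0..t}"
    by (rule ftc_ac[OF t0 acg N0 derg])
  have g0: "g 0 = x 0" unfolding g_def by (simp add: mat_exp_zero)
  have mult: "mat_exp (t *\<^sub>R F) *v (mat_exp ((-s) *\<^sub>R F) *v y) = mat_exp ((t - s) *\<^sub>R F) *v y" for s y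
  proof -
    have e: "mat_exp (t *\<^sub>R F) ** mat_exp ((-s) *\<^sub>R F) = mat_exp ((t - s) *\<^sub>R F)"
      using mat_exp_add[of t F "-s"] by simp
    show ?thesis by (simp only: matrix_vector_mul_assoc e)
  qed
  have mult': "mat_exp (t *\<^sub>R F) *v (mat_exp (- (s *\<^sub>R F)) *v y) = mat_exp ((t - s) *\<^sub>R F) *v y" for s y
    using mult[of s y] by simp
  define h1 where "h1 s = mat_exp ((t - s) *\<^sub>R F) *v (B *v w s)" for s
  define h2 where "h2 s = mat_exp ((t - s) *\<^sub>R F) *v (E *v vv s)" for s
  have I1: "((\<lambda>s. h1 s + h2 s) has_integral (x t - mat_exp (t *\<^sub>R F) *v x 0)) {0..t}"
  proof -
    have "(((*v) (mat_exp (t *\<^sub>R F)) \<circ> g') has_integral (mat_exp (t *\<^sub>R F) *v (g t - g 0))) {0..t}"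
      by (rule has_integral_linear[OF FTC matrix_vector_mul_bounded_linear])
    moreover have "((*v) (mat_exp (t *\<^sub>R F)) \<circ> g') = (\<lambda>s. h1 s + h2 s)"
      by (rule ext) (simp add: g'_def h1_def h2_def mult' matrix_vector_right_distrib)
    moreover have "mat_exp (t *\<^sub>R F) *v (g t - g 0) = x t - mat_exp (t *\<^sub>R F) *v x 0"
      using mult[of t "x t"] by (simp add: g0 g_def matrix_vector_mult_diff_distrib mat_exp_zero)
    ultimately show ?thesis by simp
  qed
  have ch2: "continuous_on {0..t} h2"
    unfolding h2_def
    by (intro cont_matexp_vec continuous_intros
        bounded_linear.continuous_on[OF matrix_vector_mul_bounded_linear cvv])
  have I2: "h2 integrable_on {0..t}" by (rule integrable_continuous_real[OF ch2])
  define d where "d = integral {0..t} h2"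
  have "((\<lambda>s. (h1 s + h2 s) - h2 s) has_integral (x t - mat_exp (t *\<^sub>R F) *v x 0 - d)) {0..t}"
    unfolding d_def by (rule has_integral_diff[OF I1 integrable_integral[OF I2]])
  then have "(h1 has_integral (x t - mat_exp (t *\<^sub>R F) *v x 0 - d)) {0..t}" by simp
  then have ih1: "integral {0..t} h1 = x t - mat_exp (t *\<^sub>R F) *v x 0 - d" by (rule integral_unique)
  have xt: "x t = (mat_exp (t *\<^sub>R F) *v x 0 + integral {0..t} h1) + d"
    using ih1 by simp
  define \<phi> where "\<phi> u s = support_fun \<Theta> (transpose E *v (mat_exp (s *\<^sub>R transpose F) *v u))" for u s
  have cphi: "continuous_on S (\<phi> u)" for u S
  proof -
    have "continuous_on S (\<lambda>s. transpose E *v (mat_exp (s *\<^sub>R transpose F) *v u))"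
      by (intro bounded_linear.continuous_on[OF matrix_vector_mul_bounded_linear]
          cont_matexp_vec continuous_intros)
    then show ?thesis
      unfolding \<phi>_def using continuous_on_compose2[OF sf_cont[OF cpt Tne, of UNIV]] by blast
  qed
  have iphi: "\<phi> u integrable_on {0..t}" for u by (rule integrable_continuous_real[OF cphi])
  define H where "H u = integral {0..t} (\<phi> u)" for u
  have Hsub: "H (u + v) \<le> H u + H v" for u v
  proof -
    have "H (u + v) \<le> integral {0..t} (\<lambda>s. \<phi> u s + \<phi> v s)"
      unfolding H_def
      by (rule integral_le[OF iphi integrable_add[OF iphi iphi]])
         (simp add: \<phi>_def matrix_vector_right_distrib sf_sub[OF cpt Tne])
    also have "\<dots> = H u + H v" unfolding H_def by (rule integral_add[OF iphi iphi])
    finally show ?thesis .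
  qed
  have Hhom: "H (c *\<^sub>R u) = c * H u" if c: "c \<ge> 0" for c u
  proof -
    have "\<phi> (c *\<^sub>R u) = (\<lambda>s. c * \<phi> u s)"
      by (rule ext) (simp add: \<phi>_def matrix_vector_mult_scaleR sf_hom[OF cpt Tne c])
    then show ?thesis unfolding H_def by simp
  qed
  define \<Xi> where "\<Xi> = {y. \<forall>u. inner u y \<le> H u}"
  have dXi: "d \<in> \<Xi>"
    unfolding \<Xi>_def
  proof (intro CollectI allI)
    fix u
    have "inner u d = integral {0..t} (\<lambda>s. inner u (h2 s))"
      unfolding d_def using integral_linear[OF I2 bounded_linear_inner_right[of u]] by (simp add: o_def)
    also have "\<dots> \<le> integral {0..t} (\<lambda>s. \<phi> u (t - s))"
    proof (rule integral_le)
      show "(\<lambda>s. inner u (h2 s)) integrable_on {0..t}"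
        by (rule integrable_continuous_real)
           (rule bounded_linear.continuous_on[OF bounded_linear_inner_right ch2])
      show "(\<lambda>s. \<phi> u (t - s)) integrable_on {0..t}"
        using flip_integral[OF integrable_integral[OF iphi[of u]]] by blast
      fix s assume s: "s \<in> {0..t}"
      have "inner u (h2 s) = inner (transpose E *v (transpose (mat_exp ((t - s) *\<^sub>R F)) *v u)) (vv s)"
        unfolding h2_def by (rule inner_transp)
      also have "transpose (mat_exp ((t - s) *\<^sub>R F)) = mat_exp ((t - s) *\<^sub>R transpose F)"
        by (simp only: transpose_scalar[symmetric] mat_exp_transpose)
      finally show "inner u (h2 s) \<le> \<phi> u (t - s)"
        unfolding \<phi>_def using sf_ge[OF cpt vvT[OF s]] by simp
    qed
    also have "\<dots> = H u"
      unfolding H_def using flip_integral[OF integrable_integral[OF iphi[of u]]] by (rule integral_unique)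
    finally show "inner u d \<le> H u" .
  qed
  have XiI: "\<Xi> = (\<Inter>u. {y. inner u y \<le> H u})" unfolding \<Xi>_def by auto
  have cvx: "convex \<Xi>" unfolding XiI by (intro convex_INT convex_halfspace_le)
  have cls: "closed \<Xi>" unfolding XiI by (intro closed_INT ballI closed_halfspace_le)
  have bnd: "bounded \<Xi>"
    unfolding bounded_iff
  proof (intro exI ballI)
    fix y assume y: "y \<in> \<Xi>"
    have "norm y \<le> (\<Sum>i\<in>UNIV. \<bar>y $ i\<bar>)" by (rule norm_le_l1_cart)
    also have "\<dots> \<le> (\<Sum>i\<in>UNIV. \<bar>H (axis i 1)\<bar> + \<bar>H (- axis i 1)\<bar>)"
    proof (rule sum_mono)
      fix i
      have ax: "inner (axis i 1) y = y $ i" by (simp add: inner_axis')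
      have y1: "inner (axis i 1) y \<le> H (axis i 1)" "inner (- axis i 1) y \<le> H (- axis i 1)"
        using y unfolding \<Xi>_def by blast+
      have "y $ i \<le> H (axis i 1)" using y1(1) ax by simp
      moreover have "- y $ i \<le> H (- axis i 1)"
        using y1(2) ax by (simp add: inner_minus_left)
      ultimately show "\<bar>y $ i\<bar> \<le> \<bar>H (axis i 1)\<bar> + \<bar>H (- axis i 1)\<bar>" by linarith
    qed
    finally show "norm y \<le> (\<Sum>i\<in>UNIV. \<bar>H (axis i 1)\<bar> + \<bar>H (- axis i 1)\<bar>)" .
  qed
  have cpX: "compact \<Xi>" using bnd cls by (simp add: compact_eq_bounded_closed)
  have sfX: "support_fun \<Xi> u = H u" for u
  proof -
    obtain p where p: "\<forall>u. inner p u \<le> H u" "inner p u = H u"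
      using sublinear_support[OF Hsub Hhom] by blast
    have pX: "p \<in> \<Xi>" using p(1) unfolding \<Xi>_def by (simp add: inner_commute)
    show ?thesis
      unfolding support_fun_def
    proof (rule cSup_eq_maximum)
      show "H u \<in> (\<lambda>v. inner u v) ` \<Xi>" using pX p(2) by (auto simp: inner_commute intro!: image_eqI[of _ _ p])
      fix r assume "r \<in> (\<lambda>v. inner u v) ` \<Xi>"
      then show "r \<le> H u" unfolding \<Xi>_def by auto
    qed
  qed
  show ?thesis
  proof (intro exI conjI allI)
    show "convex \<Xi>" by (rule cvx)
    show "compact \<Xi>" by (rule cpX)
    fix u
    show "support_fun \<Xi> u = integral {0..t} (\<lambda>s. support_fun \<Theta>
                 (transpose E *v (mat_exp (s *\<^sub>R transpose (A + E ** C)) *v u)))"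
      unfolding sfX H_def \<phi>_def F_def ..
  next
    show "x t \<in> (\<lambda>v. (mat_exp (t *\<^sub>R (A + E ** C)) *v x 0
                     + integral {0..t} (\<lambda>s. mat_exp ((t - s) *\<^sub>R (A + E ** C)) *v (B *v w s))) + v) ` \<Xi>"
      using xt dXi unfolding h1_def F_def by blast
  qed
qed

end
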